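(* Let $\theta < \sigma$ be two infinite cardinals such that $\theta$ is regular, $\sigma < \kappa$, and $d(\theta, \mu) < \kappa$ for every cardinal $\mu$ with $\theta \leq \mu < \sigma$. Let $J$ be a $\kappa$-complete ideal on $\kappa$ with $NS_\kappa|E^\kappa_\theta \subseteq J$ such that $\clubsuit_\kappa^{{\rm cof}/\sigma, *}[J]$ holds. Then $\clubsuit_\kappa^*[J]$ holds.
   Context: $\kappa$ is a regular uncountable cardinal. An ideal on $\kappa$ is a nonempty $J \subseteq P(\kappa)$ with $\kappa \notin J$, every bounded subset of $\kappa$ in $J$, $J$ closed under subsets and under unions of two members; $J^* = \{A \subseteq \kappa : \kappa\setminus A \in J\}$; $\kappa$-complete means closed under unions of fewer than $\kappa$ members. $E^\kappa_\theta$ is the set of limit ordinals below $\kappa$ of cofinality $\theta$; $NS_\kappa|E^\kappa_\theta = \{B : B \cap E^\kappa_\theta \text{ nonstationary}\}$. $acc(\kappa)$ is the set of nonzero limit ordinals below $\kappa$; $P_\sigma(X) = \{x \subseteq X : |x| < \sigma\}$; $[\kappa]^\kappa$ is the set of size-$\kappa$ subsets of $\kappa$. For cardinals $\tau \leq \mu$ with $\tau\ge1$, $\mu \ge\omega$, $d(\tau,\mu)$ is the least cardinality of $X \subseteq [\mu]^\tau$ such that every $e \in [\mu]^\tau$ has a subset in $X$. $\clubsuit_\kappa^{{\rm cof}/\sigma,*}[J]$: there are $B^i_\delta \in P_\sigma(\delta)$ for $i < \delta < \kappa$ such that for every $A \in [\kappa]^\kappa$, $\{\delta < \kappa : \exists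 i < \delta\,(\sup(A \cap B^i_\delta) = \delta)\} \in J^*$. $\clubsuit_\kappa^*[J]$: there are $s^i_\alpha \subseteq \alpha$ with $\sup s^i_\alpha = \alpha$ for $i < \alpha \in acc(\kappa)$ such that $\{\alpha < \kappa : \exists i < \alpha\,(s^i_\alpha \subseteq A)\} \in J^*$ for all $A \in [\kappa]^\kappa$. *)

theory Defs
  imports Main
begin

unbundle cardinal_syntax

text \<open>The regular uncountable cardinal kappa is represented by a cardinal order
  relation k (an initial well-order) on a type 'a; ordinals below kappa are the
  elements of Field k, and the ordinal delta is identified with the set
  underS k delta of its predecessors.\<close>

definition is_sup :: "'a rel \<Rightarrow> 'a set \<Rightarrow> 'a \<Rightarrow> bool" where
  "is_sup k X \<delta> \<longleftrightarrow> \<delta> \<in> Field k \<and> (\<forall>x\<in>X. (x, \<delta>) \<in> k) \<and>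
     (\<forall>\<beta>\<in>underS k \<delta>. \<exists>x\<in>X. \<beta> \<in> underS k x)"

definition is_limit :: "'a rel \<Rightarrow> 'a \<Rightarrow> bool" where
  "is_limit k \<delta> \<longleftrightarrow> \<delta> \<in> Field k \<and> underS k \<delta> \<noteq> {} \<and>
     (\<forall>\<beta>\<in>underS k \<delta>. \<exists>\<gamma>\<in>underS k \<delta>. \<beta> \<in> underS k \<gamma>)"

definition acc :: "'a rel \<Rightarrow> 'a set" where
  "acc k = {\<delta>. is_limit k \<delta>}"

definition cof_is :: "'a rel \<Rightarrow> 'a \<Rightarrow> 'b rel \<Rightarrow> bool" where
  "cof_is k \<delta> \<theta> \<longleftrightarrow>
     (\<exists>C. C \<subseteq> underS k \<delta> \<and> is_sup k C \<delta> \<and> (card_of C) =o \<theta>) \<and>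
     (\<forall>C. C \<subseteq> underS k \<delta> \<and> is_sup k C \<delta> \<longrightarrow> \<theta> \<le>o (card_of C))"

definition E_cof :: "'a rel \<Rightarrow> 'b rel \<Rightarrow> 'a set" where
  "E_cof k \<theta> = {\<delta>. is_limit k \<delta> \<and> cof_is k \<delta> \<theta>}"

definition unbounded :: "'a rel \<Rightarrow> 'a set \<Rightarrow> bool" where
  "unbounded k C \<longleftrightarrow> (\<forall>\<alpha>\<in>Field k. \<exists>c\<in>C. \<alpha> \<in> underS k c)"

definition closed_set :: "'a rel \<Rightarrow> 'a set \<Rightarrow> bool" where
  "closed_set k C \<longleftrightarrow> (\<forall>\<delta>. is_limit k \<delta> \<and> is_sup k (C \<inter> underS k \<delta>) \<delta> \<longrightarrow> \<delta> \<in> C)"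

definition club :: "'a rel \<Rightarrow> 'a set \<Rightarrow> bool" where
  "club k C \<longleftrightarrow> C \<subseteq> Field k \<and> closed_set k C \<and> unbounded k C"

definition stationary :: "'a rel \<Rightarrow> 'a set \<Rightarrow> bool" where
  "stationary k S \<longleftrightarrow> S \<subseteq> Field k \<and> (\<forall>C. club k C \<longrightarrow> S \<inter> C \<noteq> {})"

definition NS_restr :: "'a rel \<Rightarrow> 'a set \<Rightarrow> 'a set set" where
  "NS_restr k E = {B. B \<subseteq> Field k \<and> \<not> stationary k (B \<inter> E)}"

definition bounded_set :: "'a rel \<Rightarrow> 'a set \<Rightarrow> bool" where
  "bounded_set k A \<longleftrightarrow> (\<exists>\<alpha>\<in>Field k. A \<subseteq> underS k \<alpha>)"

definition is_ideal :: "'a rel \<Rightarrow> 'a set set \<Rightarrow> bool" where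
  "is_ideal k J \<longleftrightarrow> J \<noteq> {} \<and> J \<subseteq> Pow (Field k) \<and> Field k \<notin> J \<and>
     (\<forall>A. A \<subseteq> Field k \<and> bounded_set k A \<longrightarrow> A \<in> J) \<and>
     (\<forall>A\<in>J. \<forall>B. B \<subseteq> A \<longrightarrow> B \<in> J) \<and>
     (\<forall>A\<in>J. \<forall>B\<in>J. A \<union> B \<in> J)"

definition complete_ideal :: "'a rel \<Rightarrow> 'a set set \<Rightarrow> bool" where
  "complete_ideal k J \<longleftrightarrow> (\<forall>F. F \<subseteq> J \<and> (card_of F) <o k \<longrightarrow> \<Union>F \<in> J)"

definition dual_filter :: "'a rel \<Rightarrow> 'a set set \<Rightarrow> 'a set set" where
  "dual_filter k J = {A. A \<subseteq> Field k \<and> Field k - A \<in> J}"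

definition full_subsets :: "'a rel \<Rightarrow> 'a set set" where
  "full_subsets k = {A. A \<subseteq> Field k \<and> (card_of A) =o k}"

text \<open>d(tau, mu): least cardinality of a cofinal (under reverse inclusion)
  subfamily of [mu]^tau; mu is represented by a set M.\<close>
definition d_covers :: "'b rel \<Rightarrow> 'a set \<Rightarrow> 'a set set \<Rightarrow> bool" where
  "d_covers \<tau> M X \<longleftrightarrow> X \<subseteq> {e. e \<subseteq> M \<and> (card_of e) =o \<tau>} \<and>
     (\<forall>e. e \<subseteq> M \<and> (card_of e) =o \<tau> \<longrightarrow> (\<exists>x\<in>X. x \<subseteq> e))"

definition d_family :: "'b rel \<Rightarrow> 'a set \<Rightarrow> 'a set set" where
  "d_family \<tau> M = (SOME X. d_covers \<tau> M X \<and> (\<forall>Y. d_covers \<tau> M Y \<longrightarrow> (card_of X) \<le>o (card_of Y)))"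

definition d_card :: "'b rel \<Rightarrow> 'a set \<Rightarrow> 'a set rel" where
  "d_card \<tau> M = card_of (d_family \<tau> M)"

definition clubsuit_cof_star :: "'a rel \<Rightarrow> 'c rel \<Rightarrow> 'a set set \<Rightarrow> bool" where
  "clubsuit_cof_star k \<sigma> J \<longleftrightarrow> (\<exists>B :: 'a \<Rightarrow> 'a \<Rightarrow> 'a set.
     (\<forall>\<delta>\<in>Field k. \<forall>i\<in>underS k \<delta>. B i \<delta> \<subseteq> underS k \<delta> \<and> card_of (B i \<delta>) <o \<sigma>) \<and>
     (\<forall>A\<in>full_subsets k.
        {\<delta>\<in>Field k. \<exists>i\<in>underS k \<delta>. is_sup k (A \<inter> B i \<delta>) \<delta>} \<in> dual_filter k J))"

definition clubsuit_star :: "'a rel \<Rightarrow> 'a set set \<Rightarrow> bool" where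
  "clubsuit_star k J \<longleftrightarrow> (\<exists>s :: 'a \<Rightarrow> 'a \<Rightarrow> 'a set.
     (\<forall>\<alpha>\<in>acc k. \<forall>i\<in>underS k \<alpha>. s i \<alpha> \<subseteq> underS k \<alpha> \<and> is_sup k (s i \<alpha>) \<alpha>) \<and>
     (\<forall>A\<in>full_subsets k.
        {\<alpha>\<in>acc k. \<exists>i\<in>underS k \<alpha>. s i \<alpha> \<subseteq> A} \<in> dual_filter k J))"

end

theory Submission
  imports Defs
begin

lemma d_family_props:
  "d_covers \<tau> M (d_family \<tau> M) \<and> (\<forall>Y. d_covers \<tau> M Y \<longrightarrow> |d_family \<tau> M| \<le>o |Y| )"
proof -
  let ?R = "{ |Y| | Y. d_covers \<tau> M Y}"
  have cov0: "d_covers \<tau> M {e. e \<subseteq> M \<and> |e| =o \<tau>}" unfolding d_covers_def by blast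
  have "?R \<noteq> {}" using cov0 by blast
  moreover have "\<forall>r\<in>?R. Card_order r" using card_of_Card_order by blast
  ultimately obtain r where "r \<in> ?R" "\<forall>r'\<in>?R. r \<le>o r'" using exists_minim_Card_order[of ?R] by blast
  then obtain X where "d_covers \<tau> M X" "\<forall>Y. d_covers \<tau> M Y \<longrightarrow> |X| \<le>o |Y|" by blast
  then show ?thesis unfolding d_family_def by (rule someI2[where Q="\<lambda>X. d_covers \<tau> M X \<and> (\<forall>Y. d_covers \<tau> M Y \<longrightarrow> |X| \<le>o |Y| )", OF conjI]) 
qed

lemma d_family_mono:
  assumes "|M| =o |M'|"
  shows "|d_family \<tau> M'| \<le>o |d_family \<tau> M|"
proof -
  obtain f where f: "bij_betw f M M'" using assms card_of_ordIso by blast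
  let ?X = "d_family \<tau> M"
  have cov: "d_covers \<tau> M ?X" using d_family_props by blast
  let ?Y = "(\<lambda>x. f ` x) ` ?X"
  have "d_covers \<tau> M' ?Y"
    unfolding d_covers_def
  proof (intro conjI allI impI)
    show "?Y \<subseteq> {e. e \<subseteq> M' \<and> |e| =o \<tau>}"
    proof
      fix y assume "y \<in> ?Y"
      then obtain x where x: "x \<in> ?X" "y = f ` x" by blast
      then have "x \<subseteq> M" "|x| =o \<tau>" using cov unfolding d_covers_def by blast+
      then have "bij_betw f x y" using f x(2) by (meson bij_betw_def bij_betw_subset)
      then have "|y| =o |x|" using card_of_ordIso ordIso_symmetric by blast
      then show "y \<in> {e. e \<subseteq> M' \<and> |e| =o \<tau>}" using \<open>x \<subseteq> M\<close> \<open>|x| =o \<tau>\<close> f x(2)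
        using bij_betw_imp_surj_on ordIso_transitive by fastforce
    qed
  next
    fix e assume e: "e \<subseteq> M' \<and> |e| =o \<tau>"
    let ?g = "inv_into M f"
    have g: "bij_betw ?g M' M" using f bij_betw_inv_into by blast
    have "bij_betw ?g e (?g ` e)" using g e by (meson bij_betw_def bij_betw_subset)
    then have "|?g ` e| =o \<tau>" using e card_of_ordIso ordIso_symmetric ordIso_transitive by blast
    moreover have "?g ` e \<subseteq> M" using g e bij_betw_imp_surj_on by blast
    ultimately obtain x where x: "x \<in> ?X" "x \<subseteq> ?g ` e" using cov unfolding d_covers_def by blast
    have "f ` x \<subseteq> e"
    proof
      fix w assume "w \<in> f ` x"
      then obtain z where z: "z \<in> e" "w = f (?g z)" using x(2) by blast
      moreover have "z \<in> f ` M" using e f z bij_betw_imp_surj_on by blast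
      ultimately show "w \<in> e" by (simp add: f_inv_into_f)
    qed
    then show "\<exists>y\<in>?Y. y \<subseteq> e" using x(1) by blast
  qed
  then have "|d_family \<tau> M'| \<le>o |?Y|" using d_family_props by blast
  moreover have "|?Y| \<le>o |?X|" by (rule card_of_image)
  ultimately show ?thesis using ordLeq_transitive by blast
qed

lemma wo_facts:
  assumes "Well_order k"
  shows "trans k" "antisym k" "Refl k" "total_on (Field k) k"
  using assms unfolding well_order_on_def linear_order_on_def partial_order_on_def preorder_on_def
  by auto

lemma underS_trans1:
  assumes "Well_order k" "(a,b) \<in> k" "b \<in> underS k c"
  shows "a \<in> underS k c"
  using assms wo_facts[OF assms(1)] unfolding underS_def trans_def antisym_def by blast

lemma underS_trans2:
  assumes "Well_order k" "a \<in> underS k b" "(b,c) \<in> k"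
  shows "a \<in> underS k c"
  using assms wo_facts[OF assms(1)] unfolding underS_def trans_def antisym_def by blast

lemma le_or_gt:
  assumes "Well_order k" "a \<in> Field k" "b \<in> Field k"
  shows "(a,b) \<in> k \<or> b \<in> underS k a"
  using assms wo_facts[OF assms(1)] unfolding underS_def total_on_def refl_on_def by (cases "a = b") auto

lemma cof_subset:
  assumes wk: "Well_order k" and th: "Card_order \<theta>" and cof: "cof_is k \<delta> \<theta>"
    and D: "D \<subseteq> underS k \<delta>" "is_sup k D \<delta>"
  shows "\<exists>e\<subseteq>D. |e| =o \<theta> \<and> (\<forall>x\<subseteq>e. |x| =o \<theta> \<longrightarrow> is_sup k x \<delta>)"
proof -
  obtain C where C: "C \<subseteq> underS k \<delta>" "is_sup k C \<delta>" "|C| =o \<theta>"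
    using cof unfolding cof_is_def by blast
  have "|Field \<theta>| =o |C|" using card_of_Field_ordIso[OF th] C(3) ordIso_symmetric ordIso_transitive by blast
  then obtain g where g: "bij_betw g (Field \<theta>) C" using card_of_ordIso by blast
  have wt: "Well_order \<theta>" using th card_order_on_well_order_on by blast
  have wot: "wo_rel \<theta>" using wt wo_rel_def by blast
  have dF: "\<delta> \<in> Field k" using D(2) unfolding is_sup_def by blast
  have uF: "underS k \<delta> \<subseteq> Field k" using underS_Field by fast
  define h where "h = (\<lambda>\<alpha>. SOME x. x \<in> D \<and> g \<alpha> \<in> underS k x)"
  have hD: "h \<alpha> \<in> D \<and> g \<alpha> \<in> underS k (h \<alpha>)" if "\<alpha> \<in> Field \<theta>" for \<alpha>
  proof -
    have "g \<alpha> \<in> underS k \<delta>" using g that C(1) bij_betw_imp_surj_on by blast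
    then have "\<exists>x. x \<in> D \<and> g \<alpha> \<in> underS k x" using D(2) unfolding is_sup_def by blast
    then show ?thesis unfolding h_def by (rule someI_ex)
  qed
  define R where "R = {h \<alpha> | \<alpha>. \<alpha> \<in> Field \<theta> \<and> (\<forall>\<beta>\<in>underS \<theta> \<alpha>. h \<beta> \<in> underS k (h \<alpha>))}"
  have RD: "R \<subseteq> D" unfolding R_def using hD by blast
  have bnd: "\<exists>\<alpha>0\<in>Field \<theta>. (\<forall>\<beta>\<in>underS \<theta> \<alpha>0. h \<beta> \<in> underS k (h \<alpha>0)) \<and> \<gamma> \<in> underS k (h \<alpha>0)"
    if \<gamma>: "\<gamma> \<in> underS k \<delta>" for \<gamma>
  proof -
    obtain c where c: "c \<in> C" "\<gamma> \<in> underS k c" using C(2) \<gamma> unfolding is_sup_def by blast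
    obtain \<alpha>1 where a1: "\<alpha>1 \<in> Field \<theta>" "g \<alpha>1 = c" using g c(1) bij_betw_imp_surj_on by blast
    define P where "P = {\<alpha> \<in> Field \<theta>. \<gamma> \<in> underS k (h \<alpha>)}"
    have "\<gamma> \<in> underS k (h \<alpha>1)" using hD[OF a1(1)] a1(2) c(2) underS_trans2[OF wk, of \<gamma> c "h \<alpha>1"] unfolding underS_def by blast
    then have Pne: "P \<noteq> {}" "P \<subseteq> Field \<theta>" using a1(1) unfolding P_def by blast+
    define \<alpha>0 where "\<alpha>0 = wo_rel.minim \<theta> P"
    have a0: "\<alpha>0 \<in> P" using wo_rel.minim_in[OF wot Pne(2) Pne(1)] unfolding \<alpha>0_def .
    have a0l: "(\<alpha>0, \<alpha>) \<in> \<theta>" if "\<alpha> \<in> P" for \<alpha>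
      using wo_rel.minim_least[OF wot Pne(2) that] unfolding \<alpha>0_def .
    have "h \<beta> \<in> underS k (h \<alpha>0)" if b: "\<beta> \<in> underS \<theta> \<alpha>0" for \<beta>
    proof -
      have bF: "\<beta> \<in> Field \<theta>" using b underS_Field by fast
      have "\<beta> \<notin> P" using b a0l wo_facts[OF wt] unfolding underS_def antisym_def by blast
      then have "\<gamma> \<notin> underS k (h \<beta>)" using bF unfolding P_def by blast
      moreover have "h \<beta> \<in> Field k" "\<gamma> \<in> Field k" using hD[OF bF] D(1) \<gamma> uF by blast+
      ultimately have "(h \<beta>, \<gamma>) \<in> k" using le_or_gt[OF wk] by blast
      then show ?thesis using underS_trans1[OF wk] a0 unfolding P_def by blast
    qed
    then show ?thesis using a0 unfolding P_def by blast
  qed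
  have small: "|x| <o \<theta>" if x: "x \<subseteq> R" "\<forall>y\<in>x. (y,\<gamma>) \<in> k" and \<gamma>: "\<gamma> \<in> underS k \<delta>" for x \<gamma>
  proof -
    obtain \<alpha>0 where a0: "\<alpha>0\<in>Field \<theta>" "\<forall>\<beta>\<in>underS \<theta> \<alpha>0. h \<beta> \<in> underS k (h \<alpha>0)" "\<gamma> \<in> underS k (h \<alpha>0)"
      using bnd[OF \<gamma>] by blast
    have "x \<subseteq> h ` underS \<theta> \<alpha>0"
    proof
      fix y assume y: "y \<in> x"
      then obtain \<alpha> where al: "y = h \<alpha>" "\<alpha> \<in> Field \<theta>" "\<forall>\<beta>\<in>underS \<theta> \<alpha>. h \<beta> \<in> underS k (h \<alpha>)"
        using x(1) unfolding R_def by blast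
      have yg: "(y, \<gamma>) \<in> k" using x(2) y by blast
      have "\<alpha> \<in> underS \<theta> \<alpha>0"
      proof (rule ccontr)
        assume "\<alpha> \<notin> underS \<theta> \<alpha>0"
        then have "(\<alpha>0, \<alpha>) \<in> \<theta>" using le_or_gt[OF wt a0(1) al(2)] by blast
        then have "\<alpha>0 = \<alpha> \<or> \<alpha>0 \<in> underS \<theta> \<alpha>" unfolding underS_def by blast
        then have "(h \<alpha>0, y) \<in> k"
        proof
          assume "\<alpha>0 = \<alpha>"
          then show ?thesis using al(1) a0(3) wo_facts[OF wk] unfolding underS_def refl_on_def Field_def by blast
        next
          assume "\<alpha>0 \<in> underS \<theta> \<alpha>"
          then show ?thesis using al unfolding underS_def by blast
        qed
        then have "\<gamma> \<in> underS k y" using underS_trans2[OF wk a0(3)] by blast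
        then show False using yg wo_facts[OF wk] unfolding underS_def antisym_def by blast
      qed
      then show "y \<in> h ` underS \<theta> \<alpha>0" using al(1) by blast
    qed
    then have "|x| \<le>o |underS \<theta> \<alpha>0|" using card_of_image card_of_mono1 ordLeq_transitive by blast
    then show ?thesis using card_of_underS[OF th a0(1)] ordLeq_ordLess_trans by blast
  qed
  have Rsup: "is_sup k R \<delta>"
    unfolding is_sup_def
  proof (intro conjI ballI)
    show "\<delta> \<in> Field k" by (rule dF)
  next
    fix y assume "y \<in> R" then show "(y, \<delta>) \<in> k" using RD D(1) unfolding underS_def by blast
  next
    fix \<beta> assume "\<beta> \<in> underS k \<delta>"
    then show "\<exists>x\<in>R. \<beta> \<in> underS k x" using bnd unfolding R_def by blast
  qed
  have "R \<subseteq> h ` Field \<theta>" unfolding R_def by blast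
  then have "|R| \<le>o |Field \<theta>|" using card_of_image card_of_mono1 ordLeq_transitive by blast
  then have R1: "|R| \<le>o \<theta>" using card_of_Field_ordIso[OF th] ordLeq_ordIso_trans by blast
  have R2: "\<theta> \<le>o |R|" using cof RD D(1) Rsup unfolding cof_is_def by blast
  have Rc: "|R| =o \<theta>" using R1 R2 ordIso_iff_ordLeq by blast
  have "is_sup k x \<delta>" if x: "x \<subseteq> R" "|x| =o \<theta>" for x
    unfolding is_sup_def
  proof (intro conjI ballI)
    show "\<delta> \<in> Field k" by (rule dF)
  next
    fix y assume "y \<in> x" then show "(y, \<delta>) \<in> k" using x RD D(1) unfolding underS_def by blast
  next
    fix \<beta> assume b: "\<beta> \<in> underS k \<delta>"
    show "\<exists>y\<in>x. \<beta> \<in> underS k y"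
    proof (rule ccontr)
      assume nn: "\<not> (\<exists>y\<in>x. \<beta> \<in> underS k y)"
      have "\<forall>y\<in>x. (y, \<beta>) \<in> k"
      proof
        fix y assume "y \<in> x"
        moreover have "y \<in> Field k" "\<beta> \<in> Field k" using \<open>y \<in> x\<close> x(1) RD D(1) b uF by blast+
        ultimately show "(y, \<beta>) \<in> k" using nn le_or_gt[OF wk] by blast
      qed
      then have "|x| <o \<theta>" using small[OF x(1) _ b] by blast
      then show False using x(2) not_ordLess_ordIso by blast
    qed
  qed
  then show ?thesis using RD Rc by blast
qed

lemma card_below:
  assumes wk: "Well_order k" and X: "|X| <o k"
  shows "\<exists>b\<in>Field k. |X| \<le>o |underS k b|"
proof -
  have "\<exists>b\<in>Field k. |X| =o Restr k (underS k b)"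
    using ordLess_iff_ordIso_Restr[OF wk card_of_Well_order[of X]] X by simp
  then obtain b where b1: "b \<in> Field k" and b2: "|X| =o Restr k (underS k b)" by (elim bexE)
  have le: "|X| \<le>o Restr k (underS k b)" using b2 by (simp add: ordIso_iff_ordLeq)
  have "|Field |X| | \<le>o |Field (Restr k (underS k b))|" using le by (rule card_of_mono2)
  then have 1: "|X| \<le>o |Field (Restr k (underS k b))|" by (simp only: Field_card_of)
  have 2: "|Field (Restr k (underS k b))| \<le>o |underS k b|"
    by (rule card_of_mono1[OF Field_Restr_subset])
  have "|X| \<le>o |underS k b|" using 1 2 by (rule ordLeq_transitive)
  then show ?thesis using b1 by (intro bexI)
qed

lemma uniform_bound:
  fixes k :: "'a rel" and \<theta> :: "'b rel" and \<sigma> :: "'c rel"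
  assumes k_card: "Card_order k" and k_reg: "regularCard k"
    and \<sigma>_card: "Card_order \<sigma>" and \<sigma>k: "\<sigma> <o k"
    and d_small: "\<forall>M :: 'a set. \<theta> \<le>o (card_of M) \<and> (card_of M) <o \<sigma> \<longrightarrow> d_card \<theta> M <o k"
  shows "\<exists>lam\<in>Field k. \<forall>M::'a set. \<theta> \<le>o |M| \<and> |M| <o \<sigma> \<longrightarrow> |d_family \<theta> M| \<le>o |underS k lam|"
proof -
  have wk: "Well_order k" using k_card card_order_on_well_order_on by blast
  have ws: "Well_order \<sigma>" using \<sigma>_card card_order_on_well_order_on by blast
  define P where "P = (\<lambda>a (M::'a set). \<theta> \<le>o |M| \<and> |M| =o Restr \<sigma> (underS \<sigma> a))"
  define Aset where "Aset = {a\<in>Field \<sigma>. \<exists>M. P a M}"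
  define Ma where "Ma = (\<lambda>a. SOME M. P a M)"
  have MaP: "P a (Ma a)" if "a \<in> Aset" for a
    using that unfolding Aset_def Ma_def by (blast intro: someI_ex)
  have Restr_less: "Restr \<sigma> (underS \<sigma> a) <o \<sigma>" if "a \<in> Field \<sigma>" for a
  proof -
    have "Restr \<sigma> (underS \<sigma> a) =o Restr \<sigma> (underS \<sigma> a)" by (rule ordIso_reflexive[OF Well_order_Restr[OF ws]])
    then show ?thesis using ordLess_iff_ordIso_Restr[OF ws Well_order_Restr[OF ws]] that by blast
  qed
  have ex_b: "\<exists>b\<in>Field k. |d_family \<theta> (Ma a)| \<le>o |underS k b|" if a: "a \<in> Aset" for a
  proof -
    have aF: "a \<in> Field \<sigma>" using a unfolding Aset_def by blast
    have "|Ma a| =o Restr \<sigma> (underS \<sigma> a)" using MaP[OF a] unfolding P_def by blast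
    then have "|Ma a| <o \<sigma>" using Restr_less[OF aF] by (rule ordIso_ordLess_trans)
    then have "d_card \<theta> (Ma a) <o k" using d_small MaP[OF a] unfolding P_def by blast
    then show ?thesis using card_below[OF wk] unfolding d_card_def by blast
  qed
  define \<beta> where "\<beta> = (\<lambda>a. SOME b. b\<in>Field k \<and> |d_family \<theta> (Ma a)| \<le>o |underS k b| )"
  have \<beta>P: "\<beta> a \<in> Field k \<and> |d_family \<theta> (Ma a)| \<le>o |underS k (\<beta> a)|" if "a \<in> Aset" for a
    using ex_b[OF that] unfolding \<beta>_def by (rule someI2_bex) blast
  define K where "K = \<beta> ` Aset"
  have KF: "K \<subseteq> Field k" using \<beta>P unfolding K_def by blast
  have AF: "Aset \<subseteq> Field \<sigma>" by (auto simp: Aset_def)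
  have "|K| \<le>o |Aset|" unfolding K_def by (rule card_of_image)
  moreover have "|Aset| \<le>o |Field \<sigma>|" using AF by (rule card_of_mono1)
  ultimately have "|K| \<le>o |Field \<sigma>|" by (rule ordLeq_transitive)
  then have "|K| \<le>o \<sigma>" using card_of_Field_ordIso[OF \<sigma>_card] by (rule ordLeq_ordIso_trans)
  then have "|K| <o k" using \<sigma>k by (rule ordLeq_ordLess_trans)
  then have "\<not> |K| =o k" using not_ordLess_ordIso by blast
  then have "\<not> cofinal K k" using k_reg KF unfolding regularCard_def by blast
  then obtain lam where l: "lam \<in> Field k" "\<forall>b\<in>K. lam = b \<or> (lam, b) \<notin> k" unfolding cofinal_def by blast
  have bl: "|underS k (\<beta> a)| \<le>o |underS k lam|" if a: "a \<in> Aset" for a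
  proof -
    have "\<beta> a \<in> K" using a unfolding K_def by blast
    then have "lam = \<beta> a \<or> (lam, \<beta> a) \<notin> k" "\<beta> a \<in> Field k" using l KF by blast+
    then have "(\<beta> a, lam) \<in> k" using le_or_gt[OF wk l(1), of "\<beta> a"] wo_facts(3)[OF wk]
      unfolding underS_def refl_on_def by auto
    then have "underS k (\<beta> a) \<subseteq> underS k lam" using underS_trans2[OF wk] by blast
    then show ?thesis using card_of_mono1 by blast
  qed
  show ?thesis
  proof (intro bexI[OF _ l(1)] allI impI)
    fix M :: "'a set" assume M: "\<theta> \<le>o |M| \<and> |M| <o \<sigma>"
    then obtain a where a: "a \<in> Field \<sigma>" "|M| =o Restr \<sigma> (underS \<sigma> a)"
      using iffD1[OF ordLess_iff_ordIso_Restr[OF ws card_of_Well_order[of M]]] by blast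
    then have aA: "a \<in> Aset" using M unfolding Aset_def P_def by blast
    have "|Ma a| =o Restr \<sigma> (underS \<sigma> a)" using MaP[OF aA] unfolding P_def by blast
    then have "|Ma a| =o |M|" using ordIso_symmetric[OF a(2)] by (rule ordIso_transitive)
    then have "|d_family \<theta> M| \<le>o |d_family \<theta> (Ma a)|" by (rule d_family_mono)
    moreover have "|d_family \<theta> (Ma a)| \<le>o |underS k lam|"
      using ordLeq_transitive[OF conjunct2[OF \<beta>P[OF aA]] bl[OF aA]] .
    ultimately show "|d_family \<theta> M| \<le>o |underS k lam|"
      by (rule ordLeq_transitive)
  qed
qed

theorem proposition3p26:
  fixes k :: "'a rel" and \<theta> :: "'b rel" and \<sigma> :: "'c rel" and J :: "'a set set"
  assumes k_card: "Card_order k" and k_reg: "regularCard k" and k_unc: "natLeq <o k"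
    and \<theta>_card: "Card_order \<theta>" and \<theta>_inf: "cinfinite \<theta>" and \<theta>_reg: "regularCard \<theta>"
    and \<sigma>_card: "Card_order \<sigma>" and \<sigma>_inf: "cinfinite \<sigma>"
    and \<theta>\<sigma>: "\<theta> <o \<sigma>" and \<sigma>k: "\<sigma> <o k"
    and d_small: "\<forall>M :: 'a set. \<theta> \<le>o (card_of M) \<and> (card_of M) <o \<sigma> \<longrightarrow> d_card \<theta> M <o k"
    and J_ideal: "is_ideal k J" and J_complete: "complete_ideal k J"
    and NS_J: "NS_restr k (E_cof k \<theta>) \<subseteq> J"
    and club_cof: "clubsuit_cof_star k \<sigma> J"
  shows "clubsuit_star k J"
proof -
  have wk: "Well_order k" using k_card card_order_on_well_order_on by blast
  have "natLeq \<le>o k" using k_unc by (rule ordLess_imp_ordLeq)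
  then have "natLeq \<le>o |Field k|" using ordIso_symmetric[OF card_of_Field_ordIso[OF k_card]]
    by (rule ordLeq_ordIso_trans)
  then have kinf: "\<not> finite (Field k)" using infinite_iff_natLeq_ordLeq by blast
  have clubF: "club k (Field k)"
    unfolding club_def closed_set_def unbounded_def is_limit_def
    using infinite_Card_order_limit[OF k_card kinf] unfolding underS_def by blast
  define E where "E = E_cof k \<theta>"
  have FE: "Field k - E \<in> J"
  proof -
    have "\<not> stationary k ((Field k - E) \<inter> E)" using clubF unfolding stationary_def by blast
    then have "Field k - E \<in> NS_restr k E" unfolding NS_restr_def by blast
    then show ?thesis using NS_J unfolding E_def by blast
  qed
  have Jsub: "\<And>X Y. X \<in> J \<Longrightarrow> Y \<subseteq> X \<Longrightarrow> Y \<in> J" using J_ideal unfolding is_ideal_def by blast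
  have Jun: "\<And>X Y. X \<in> J \<Longrightarrow> Y \<in> J \<Longrightarrow> X \<union> Y \<in> J" using J_ideal unfolding is_ideal_def by blast
  have Jbd: "\<And>X. X \<subseteq> Field k \<Longrightarrow> bounded_set k X \<Longrightarrow> X \<in> J" using J_ideal unfolding is_ideal_def by blast
  obtain B :: "'a \<Rightarrow> 'a \<Rightarrow> 'a set" where
    B1: "\<forall>\<delta>\<in>Field k. \<forall>i\<in>underS k \<delta>. B i \<delta> \<subseteq> underS k \<delta> \<and> |B i \<delta>| <o \<sigma>" and
    B2: "\<forall>A\<in>full_subsets k.
        {\<delta>\<in>Field k. \<exists>i\<in>underS k \<delta>. is_sup k (A \<inter> B i \<delta>) \<delta>} \<in> dual_filter k J"
    using club_cof unfolding clubsuit_cof_star_def by blast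
  obtain lam where lamF: "lam \<in> Field k" and
    lamB: "\<forall>M::'a set. \<theta> \<le>o |M| \<and> |M| <o \<sigma> \<longrightarrow> |d_family \<theta> M| \<le>o |underS k lam|"
    using uniform_bound[OF k_card k_reg \<sigma>_card \<sigma>k d_small] by blast
  define S where "S = (\<lambda>\<alpha>. {x. x \<subseteq> underS k \<alpha> \<and> is_sup k x \<alpha> \<and>
      (\<exists>i\<in>underS k \<alpha>. \<theta> \<le>o |B i \<alpha>| \<and> x \<in> d_family \<theta> (B i \<alpha>))})"
  define s where "s = (\<lambda>i \<alpha>. if (\<exists>g. g ` underS k \<alpha> = S \<alpha>)
      then (SOME g. g ` underS k \<alpha> = S \<alpha>) i else underS k \<alpha>)"
  have s_in: "s i \<alpha> \<in> S \<alpha>" if "\<exists>g. g ` underS k \<alpha> = S \<alpha>" "i \<in> underS k \<alpha>" for i \<alpha>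
  proof -
    have "(SOME g. g ` underS k \<alpha> = S \<alpha>) ` underS k \<alpha> = S \<alpha>" using that(1) by (rule someI_ex)
    then show ?thesis using that unfolding s_def by auto
  qed
  have part1: "\<forall>\<alpha>\<in>acc k. \<forall>i\<in>underS k \<alpha>. s i \<alpha> \<subseteq> underS k \<alpha> \<and> is_sup k (s i \<alpha>) \<alpha>"
  proof (intro ballI)
    fix \<alpha> i assume a: "\<alpha> \<in> acc k" and i: "i \<in> underS k \<alpha>"
    show "s i \<alpha> \<subseteq> underS k \<alpha> \<and> is_sup k (s i \<alpha>) \<alpha>"
    proof (cases "\<exists>g. g ` underS k \<alpha> = S \<alpha>")
      case True
      then show ?thesis using s_in[OF True i] unfolding S_def by blast
    next
      case False
      then have "s i \<alpha> = underS k \<alpha>" unfolding s_def by simp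
      moreover have "is_sup k (underS k \<alpha>) \<alpha>" using a unfolding acc_def is_limit_def is_sup_def underS_def
        by blast
      ultimately show ?thesis by simp
    qed
  qed
  have part2: "{\<alpha>\<in>acc k. \<exists>i\<in>underS k \<alpha>. s i \<alpha> \<subseteq> A} \<in> dual_filter k J"
    if A: "A \<in> full_subsets k" for A
  proof -
    define T where "T = {\<alpha>\<in>acc k. \<exists>i\<in>underS k \<alpha>. s i \<alpha> \<subseteq> A}"
    define G where "G = {\<delta>\<in>Field k. \<exists>i\<in>underS k \<delta>. is_sup k (A \<inter> B i \<delta>) \<delta>}"
    have FG: "Field k - G \<in> J" using B2 A unfolding G_def dual_filter_def by blast
    have ul: "underS k lam \<in> J"
      by (rule Jbd) (use lamF underS_Field in \<open>auto simp: bounded_set_def\<close>)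
    have Bad: "(Field k - G) \<union> (Field k - E) \<union> underS k lam \<in> J"
      using Jun[OF Jun[OF FG FE] ul] .
    have TF: "T \<subseteq> Field k" unfolding T_def acc_def is_limit_def by blast
    have good: "\<delta> \<in> T" if d: "\<delta> \<in> Field k" "\<delta> \<in> G" "\<delta> \<in> E" "\<delta> \<notin> underS k lam" for \<delta>
    proof -
      have lim: "is_limit k \<delta>" and cof: "cof_is k \<delta> \<theta>" using d(3) unfolding E_def E_cof_def by blast+
      obtain i where i: "i \<in> underS k \<delta>" "is_sup k (A \<inter> B i \<delta>) \<delta>" using d(2) unfolding G_def by blast
      have Bi: "B i \<delta> \<subseteq> underS k \<delta>" "|B i \<delta>| <o \<sigma>" using B1 d(1) i(1) by blast+
      have Dsub: "A \<inter> B i \<delta> \<subseteq> underS k \<delta>" using Bi(1) by blast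
      have "\<exists>e\<subseteq>A \<inter> B i \<delta>. |e| =o \<theta> \<and> (\<forall>x\<subseteq>e. |x| =o \<theta> \<longrightarrow> is_sup k x \<delta>)"
        by (rule cof_subset[OF wk \<theta>_card cof Dsub i(2)])
      then obtain e where e: "e \<subseteq> A \<inter> B i \<delta>" "|e| =o \<theta>" "\<forall>x\<subseteq>e. |x| =o \<theta> \<longrightarrow> is_sup k x \<delta>"
        by (elim exE conjE)
      have eB: "e \<subseteq> B i \<delta>" using e(1) by blast
      have "|e| \<le>o |B i \<delta>|" using eB by (rule card_of_mono1)
      then have thB: "\<theta> \<le>o |B i \<delta>|" by (rule ordIso_ordLeq_trans[OF ordIso_symmetric[OF e(2)]])
      have cov: "d_covers \<theta> (B i \<delta>) (d_family \<theta> (B i \<delta>))" using d_family_props by (rule conjunct1)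
      have cov1: "d_family \<theta> (B i \<delta>) \<subseteq> {e. e \<subseteq> B i \<delta> \<and> |e| =o \<theta>}"
        using cov unfolding d_covers_def by (rule conjunct1)
      have cov2: "\<forall>e'. e' \<subseteq> B i \<delta> \<and> |e'| =o \<theta> \<longrightarrow> (\<exists>x\<in>d_family \<theta> (B i \<delta>). x \<subseteq> e')"
        using cov unfolding d_covers_def by (rule conjunct2)
      have "\<exists>x\<in>d_family \<theta> (B i \<delta>). x \<subseteq> e" using cov2 eB e(2) by simp
      then obtain x where x: "x \<in> d_family \<theta> (B i \<delta>)" "x \<subseteq> e" by (elim bexE)
      have xc: "|x| =o \<theta>" using cov1 x(1) by auto
      have xsup: "is_sup k x \<delta>" using e(3) x(2) xc by simp
      have xS: "x \<in> S \<delta>" unfolding S_def using x xsup e(1) Bi(1) i(1) thB by blast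
      obtain C where C: "C \<subseteq> underS k \<delta>" "|C| =o \<theta>" using cof unfolding cof_is_def by blast
      have "|C| =o |Field \<theta>|" using C(2) ordIso_symmetric[OF card_of_Field_ordIso[OF \<theta>_card]]
        by (rule ordIso_transitive)
      then have "finite C = finite (Field \<theta>)" by (rule card_of_ordIso_finite)
      then have "\<not> finite C" using \<theta>_inf unfolding cinfinite_def by simp
      then have uinf: "\<not> finite (underS k \<delta>)" using C(1) finite_subset by blast
      have lamd: "(lam, \<delta>) \<in> k" using le_or_gt[OF wk lamF d(1)] d(4) by blast
      have ulud: "|underS k lam| \<le>o |underS k \<delta>|"
        by (rule card_of_mono1) (use underS_trans2[OF wk _ lamd] in blast)
      define I where "I = {j\<in>underS k \<delta>. \<theta> \<le>o |B j \<delta>|}"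
      have "S \<delta> \<subseteq> (\<Union>j\<in>I. d_family \<theta> (B j \<delta>))" unfolding S_def I_def by blast
      moreover have "|\<Union>j\<in>I. d_family \<theta> (B j \<delta>)| \<le>o |underS k \<delta>|"
      proof (rule card_of_UNION_ordLeq_infinite[OF uinf])
        show "|I| \<le>o |underS k \<delta>|" unfolding I_def by (rule card_of_mono1) blast
        show "\<forall>j\<in>I. |d_family \<theta> (B j \<delta>)| \<le>o |underS k \<delta>|"
        proof
          fix j assume j: "j \<in> I"
          have "\<theta> \<le>o |B j \<delta>| \<and> |B j \<delta>| <o \<sigma>" using j B1 d(1) unfolding I_def by blast
          then have "|d_family \<theta> (B j \<delta>)| \<le>o |underS k lam|" using lamB by blast
          then show "|d_family \<theta> (B j \<delta>)| \<le>o |underS k \<delta>|" using ulud by (rule ordLeq_transitive)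
        qed
      qed
      ultimately have Sle: "|S \<delta>| \<le>o |underS k \<delta>|" by (rule ordLeq_transitive[OF card_of_mono1])
      have Sne: "S \<delta> \<noteq> {}" using xS by blast
      have ex: "\<exists>g. g ` underS k \<delta> = S \<delta>" using iffD2[OF card_of_ordLeq2[OF Sne, of "underS k \<delta>"] Sle] .
      have "(SOME g. g ` underS k \<delta> = S \<delta>) ` underS k \<delta> = S \<delta>" using ex by (rule someI_ex)
      then have "x \<in> (SOME g. g ` underS k \<delta> = S \<delta>) ` underS k \<delta>" using xS by simp
      then obtain i' where i': "i' \<in> underS k \<delta>" "(SOME g. g ` underS k \<delta> = S \<delta>) i' = x"
        by (elim imageE) simp
      then have "s i' \<delta> = x" using ex unfolding s_def by simp
      then have "s i' \<delta> \<subseteq> A" using x(2) e(1) by blast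
      moreover have "\<delta> \<in> acc k" using lim unfolding acc_def by blast
      ultimately show ?thesis unfolding T_def using i'(1) by blast
    qed
    have "Field k - T \<subseteq> (Field k - G) \<union> (Field k - E) \<union> underS k lam" using good by blast
    then have "Field k - T \<in> J" using Jsub[OF Bad] by blast
    then show ?thesis using TF unfolding T_def dual_filter_def by blast
  qed
  show ?thesis unfolding clubsuit_star_def using part1 part2 by blast
qed

end
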